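(* Let $\beta=(\beta_{ij})_{i,j\ge 0,\ i+j\le 6}$ be a real sequence such that $\mathcal M(3)(\beta)$ is positive semidefinite, $\mathcal M(2)(\beta)$ is positive definite, and $\operatorname{rank}\mathcal M(3)=\operatorname{card}\mathcal V=7$, where $\mathcal V$ is the algebraic variety of $\mathcal M(3)$. Suppose the columns $\mathcal B_3=\{1,X,Y,X^2,XY,Y^2,XY^2\}$ form a basis of the column space of $\mathcal M(3)$. Then $\beta$ admits a representing measure if and only if $\mathcal M(3)$ is weakly consistent.
   Context: The moment matrix $\mathcal M(3)(\beta)$ has rows and columns indexed by $1,X,Y,X^2,XY,Y^2,X^3,X^2Y,XY^2,Y^3$ in this order, with entry $\beta_{i+k,j+l}$ in row $X^iY^j$ and column $X^kY^l$; $\mathcal M(2)(\beta)$ is its principal submatrix indexed by monomials of degree $\le 2$. For $p(x,y)=\sum a_{ij}x^iy^j$ of degree $\le 3$, $p(X,Y)=\sum a_{ij}X^iY^j$ is the corresponding linear combination of columns. The algebraic variety is $\mathcal V=\bigcap\{\mathcal Z(p):\deg p\le 3,\ p(X,Y)=\mathbf 0\}$ with $\mathcal Z(p)$ the real zero set of $p$. A representing measure is a positive Borel measure $\mu$ on $\mathbb R^2$ with $\beta_{ij}=\int x^iy^j\,d\mu$ for $i+j\le 6$. $\mathcal M(3)$ is weakly consistent if every polynomial $p$ of degree $\le 3$ vanishing on $\mathcal V$ satisfies $p(X,Y)=\mathbf 0$. *)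

theory Defs
  imports "HOL-Analysis.Analysis" "HOL-Probability.Probability"
begin

datatype mon3 = M1 | MX | MY | MXX | MXY | MYY | MXXX | MXXY | MXYY | MYYY

instance mon3 :: finite
proof
  have "UNIV = {M1, MX, MY, MXX, MXY, MYY, MXXX, MXXY, MXYY, MYYY}"
    using mon3.exhaust by auto
  then show "finite (UNIV :: mon3 set)" by (metis finite.emptyI finite_insert)
qed

datatype mon2 = N1 | NX | NY | NXX | NXY | NYY

instance mon2 :: finite
proof
  have "UNIV = {N1, NX, NY, NXX, NXY, NYY}"
    using mon2.exhaust by auto
  then show "finite (UNIV :: mon2 set)" by (metis finite.emptyI finite_insert)
qed

fun expo :: "mon3 \<Rightarrow> nat \<times> nat" where
  "expo M1 = (0,0)" | "expo MX = (1,0)" | "expo MY = (0,1)"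
| "expo MXX = (2,0)" | "expo MXY = (1,1)" | "expo MYY = (0,2)"
| "expo MXXX = (3,0)" | "expo MXXY = (2,1)" | "expo MXYY = (1,2)" | "expo MYYY = (0,3)"

fun emb2 :: "mon2 \<Rightarrow> mon3" where
  "emb2 N1 = M1" | "emb2 NX = MX" | "emb2 NY = MY"
| "emb2 NXX = MXX" | "emb2 NXY = MXY" | "emb2 NYY = MYY"

definition moment_matrix3 :: "(nat \<Rightarrow> nat \<Rightarrow> real) \<Rightarrow> real^mon3^mon3" where
  "moment_matrix3 \<beta> = (\<chi> r c. \<beta> (fst (expo r) + fst (expo c)) (snd (expo r) + snd (expo c)))"

definition moment_matrix2 :: "(nat \<Rightarrow> nat \<Rightarrow> real) \<Rightarrow> real^mon2^mon2" where
  "moment_matrix2 \<beta> = (\<chi> r c. moment_matrix3 \<beta> $ emb2 r $ emb2 c)"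

definition psd :: "real^'n^'n \<Rightarrow> bool" where
  "psd A \<longleftrightarrow> (\<forall>v. 0 \<le> v \<bullet> (A *v v))"

definition pd :: "real^'n^'n \<Rightarrow> bool" where
  "pd A \<longleftrightarrow> (\<forall>v. v \<noteq> 0 \<longrightarrow> 0 < v \<bullet> (A *v v))"

text \<open>A polynomial of degree at most 3 is given by its coefficient vector a (indexed by monomials).
  poly_eval a (x,y) = p(x,y); col_comb M a = p(X,Y), the combination of columns of M.\<close>
definition poly_eval :: "real^mon3 \<Rightarrow> real \<times> real \<Rightarrow> real" where
  "poly_eval a z = (\<Sum>m\<in>UNIV. a $ m * fst z ^ fst (expo m) * snd z ^ snd (expo m))"

definition col_comb :: "real^mon3^mon3 \<Rightarrow> real^mon3 \<Rightarrow> real^mon3" where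
  "col_comb M a = (\<Sum>m\<in>UNIV. a $ m *s column m M)"

definition zero_set :: "real^mon3 \<Rightarrow> (real \<times> real) set" where
  "zero_set a = {z. poly_eval a z = 0}"

definition variety :: "real^mon3^mon3 \<Rightarrow> (real \<times> real) set" where
  "variety M = \<Inter> {zero_set a | a. col_comb M a = 0}"

definition weakly_consistent :: "real^mon3^mon3 \<Rightarrow> bool" where
  "weakly_consistent M \<longleftrightarrow>
     (\<forall>a. (\<forall>z\<in>variety M. poly_eval a z = 0) \<longrightarrow> col_comb M a = 0)"

definition representing_measure :: "(nat \<Rightarrow> nat \<Rightarrow> real) \<Rightarrow> (real \<times> real) measure \<Rightarrow> bool" where
  "representing_measure \<beta> \<mu> \<longleftrightarrow> sets \<mu> = sets borel \<and>
     (\<forall>i j. i + j \<le> 6 \<longrightarrow>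
        integrable \<mu> (\<lambda>z. fst z ^ i * snd z ^ j) \<and>
        \<beta> i j = (\<integral>z. fst z ^ i * snd z ^ j \<partial>\<mu>))"

definition cols_basis :: "real^mon3^mon3 \<Rightarrow> mon3 set \<Rightarrow> bool" where
  "cols_basis M B \<longleftrightarrow> inj_on (\<lambda>m. column m M) B \<and>
     independent ((\<lambda>m. column m M) ` B) \<and>
     span ((\<lambda>m. column m M) ` B) = span (columns M)"

end

theory Submission
  imports Defs
begin

lemma UNIV_mon3: "(UNIV::mon3 set) = {M1, MX, MY, MXX, MXY, MYY, MXXX, MXXY, MXYY, MYYY}"
  using mon3.exhaust by auto

lemma sum_mon3: "(\<Sum>m\<in>UNIV. f m) = f M1 + f MX + f MY + f MXX + f MXY + f MYY + f MXXX + f MXXY + f MXYY + f MYYY"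
  by (simp add: UNIV_mon3 algebra_simps)

definition ip :: "(nat\<Rightarrow>nat\<Rightarrow>real) \<Rightarrow> real^mon3 \<Rightarrow> real^mon3 \<Rightarrow> real" where
  "ip \<beta> a b = a \<bullet> (moment_matrix3 \<beta> *v b)"

lemma ip_expand: "ip \<beta> a b = (\<Sum>r\<in>UNIV. \<Sum>c\<in>UNIV. a$r * b$c * \<beta> (fst(expo r)+fst(expo c)) (snd(expo r)+snd(expo c)))"
  unfolding ip_def inner_vec_def matrix_vector_mult_def moment_matrix3_def
  by (auto simp: sum_distrib_left intro!: sum.cong)

lemma ip_sym: "ip \<beta> a b = ip \<beta> b a"
  unfolding ip_expand
  apply (subst sum.swap)
  by (simp add: add.commute mult.commute mult.left_commute)

lemma ip_add1: "ip \<beta> (a + b) c = ip \<beta> a c + ip \<beta> b c"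
  unfolding ip_def by (simp add: inner_add_left)
lemma ip_add2: "ip \<beta> c (a + b) = ip \<beta> c a + ip \<beta> c b"
  unfolding ip_def by (simp add: matrix_vector_right_distrib inner_add_right)
lemma ip_diff1: "ip \<beta> (a - b) c = ip \<beta> a c - ip \<beta> b c"
  unfolding ip_def by (simp add: inner_diff_left)
lemma ip_diff2: "ip \<beta> c (a - b) = ip \<beta> c a - ip \<beta> c b"
  unfolding ip_def by (simp add: matrix_vector_mult_diff_distrib inner_diff_right)
lemma ip_scale1: "ip \<beta> (t *s a) c = t * ip \<beta> a c"
  unfolding ip_def by (simp add: scalar_mult_eq_scaleR)
lemma ip_scale2: "ip \<beta> c (t *s a) = t * ip \<beta> c a"
  unfolding ip_def by (simp add: scalar_mult_eq_scaleR matrix_vector_mult_scaleR)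
lemma ip_sum2: "finite I \<Longrightarrow> ip \<beta> c (\<Sum>i\<in>I. f i) = (\<Sum>i\<in>I. ip \<beta> c (f i))"
  by (induction I rule: finite_induct) (auto simp: ip_add2, simp add: ip_def)
lemma ip_sum1: "finite I \<Longrightarrow> ip \<beta> (\<Sum>i\<in>I. f i) c = (\<Sum>i\<in>I. ip \<beta> (f i) c)"
  by (induction I rule: finite_induct) (auto simp: ip_add1, simp add: ip_def)
lemma ip_ker2: "moment_matrix3 \<beta> *v b = 0 \<Longrightarrow> ip \<beta> a b = 0"
  unfolding ip_def by simp
lemma ip_ker1: "moment_matrix3 \<beta> *v b = 0 \<Longrightarrow> ip \<beta> b a = 0"
  by (subst ip_sym) (rule ip_ker2)

lemma col_comb_eq: "col_comb M a = M *v a"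
  unfolding col_comb_def by (simp add: matrix_mult_sum)

lemma poly_eval_add: "poly_eval (a + b) z = poly_eval a z + poly_eval b z"
  unfolding poly_eval_def by (simp add: sum.distrib algebra_simps)
lemma poly_eval_diff: "poly_eval (a - b) z = poly_eval a z - poly_eval b z"
  unfolding poly_eval_def by (simp add: sum_subtractf algebra_simps)
lemma poly_eval_scale: "poly_eval (t *s a) z = t * poly_eval a z"
  unfolding poly_eval_def by (simp add: sum_distrib_left algebra_simps)
lemma poly_eval_zero: "poly_eval 0 z = 0"
  unfolding poly_eval_def by simp
lemma poly_eval_sum: "finite I \<Longrightarrow> poly_eval (\<Sum>i\<in>I. f i) z = (\<Sum>i\<in>I. poly_eval (f i) z)"
  by (induction I rule: finite_induct) (auto simp: poly_eval_add poly_eval_zero)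
lemma poly_eval_axis: "poly_eval (axis m 1) z = fst z ^ fst (expo m) * snd z ^ snd (expo m)"
  unfolding poly_eval_def by (subst sum.remove[of _ m]) (auto simp: axis_def)

lemma expo_deg: "fst (expo m) + snd (expo m) \<le> 3"
  by (cases m) auto

lemma poly_prod_expand:
  "poly_eval a z * poly_eval b z =
   (\<Sum>r\<in>UNIV. \<Sum>c\<in>UNIV. a$r * b$c * (fst z ^ (fst(expo r)+fst(expo c)) * snd z ^ (snd(expo r)+snd(expo c))))"
  unfolding poly_eval_def sum_product
  by (intro sum.cong refl) (simp add: power_add algebra_simps)

lemma repr_mon:
  assumes "representing_measure \<beta> \<mu>"
  shows "integrable \<mu> (\<lambda>z. fst z ^ (fst(expo r)+fst(expo c)) * snd z ^ (snd(expo r)+snd(expo c)))"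
    and "\<beta> (fst(expo r)+fst(expo c)) (snd(expo r)+snd(expo c)) =
         (\<integral>z. fst z ^ (fst(expo r)+fst(expo c)) * snd z ^ (snd(expo r)+snd(expo c)) \<partial>\<mu>)"
proof -
  have "(fst(expo r)+fst(expo c)) + (snd(expo r)+snd(expo c)) \<le> 6"
    using expo_deg[of r] expo_deg[of c] by linarith
  then show "integrable \<mu> (\<lambda>z. fst z ^ (fst(expo r)+fst(expo c)) * snd z ^ (snd(expo r)+snd(expo c)))"
    and "\<beta> (fst(expo r)+fst(expo c)) (snd(expo r)+snd(expo c)) =
         (\<integral>z. fst z ^ (fst(expo r)+fst(expo c)) * snd z ^ (snd(expo r)+snd(expo c)) \<partial>\<mu>)"
    using assms unfolding representing_measure_def by blast+
qed

lemma ip_integral: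
  assumes "representing_measure \<beta> \<mu>"
  shows "integrable \<mu> (\<lambda>z. poly_eval a z * poly_eval b z)"
    and "ip \<beta> a b = (\<integral>z. poly_eval a z * poly_eval b z \<partial>\<mu>)"
proof -
  note im = repr_mon[OF assms]
  show "integrable \<mu> (\<lambda>z. poly_eval a z * poly_eval b z)"
    unfolding poly_prod_expand
    by (intro Bochner_Integration.integrable_sum) (simp add: im)
  have "(\<integral>z. poly_eval a z * poly_eval b z \<partial>\<mu>) =
     (\<Sum>r\<in>UNIV. \<Sum>c\<in>UNIV. a$r * b$c * (\<integral>z. fst z ^ (fst(expo r)+fst(expo c)) * snd z ^ (snd(expo r)+snd(expo c)) \<partial>\<mu>))"
    unfolding poly_prod_expand
  proof (subst Bochner_Integration.integral_sum)
    show "\<And>r. r \<in> UNIV \<Longrightarrow> integrable \<mu> (\<lambda>z. \<Sum>c\<in>UNIV. a$r * b$c * (fst z ^ (fst(expo r)+fst(expo c)) * snd z ^ (snd(expo r)+snd(expo c))))"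
      by (intro Bochner_Integration.integrable_sum) (simp add: im)
    show "(\<Sum>r\<in>UNIV. \<integral>z. (\<Sum>c\<in>UNIV. a$r * b$c * (fst z ^ (fst(expo r)+fst(expo c)) * snd z ^ (snd(expo r)+snd(expo c)))) \<partial>\<mu>) =
     (\<Sum>r\<in>UNIV. \<Sum>c\<in>UNIV. a$r * b$c * (\<integral>z. fst z ^ (fst(expo r)+fst(expo c)) * snd z ^ (snd(expo r)+snd(expo c)) \<partial>\<mu>))"
    proof (rule sum.cong[OF refl])
      fix r
      show "(\<integral>z. (\<Sum>c\<in>UNIV. a$r * b$c * (fst z ^ (fst(expo r)+fst(expo c)) * snd z ^ (snd(expo r)+snd(expo c)))) \<partial>\<mu>) =
         (\<Sum>c\<in>UNIV. a$r * b$c * (\<integral>z. fst z ^ (fst(expo r)+fst(expo c)) * snd z ^ (snd(expo r)+snd(expo c)) \<partial>\<mu>))"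
        by (subst Bochner_Integration.integral_sum) (simp_all add: im)
    qed
  qed
  also have "\<dots> = ip \<beta> a b"
    unfolding ip_expand using im(2) by simp
  finally show "ip \<beta> a b = (\<integral>z. poly_eval a z * poly_eval b z \<partial>\<mu>)" by simp
qed

lemma poly_eval_meas:
  assumes "sets \<mu> = sets borel"
  shows "(\<lambda>z. poly_eval a z) \<in> borel_measurable \<mu>"
proof -
  have "(\<lambda>z. poly_eval a z) \<in> borel_measurable borel"
    unfolding poly_eval_def by (intro borel_measurable_continuous_onI continuous_intros)
  then show ?thesis using measurable_cong_sets[OF assms refl] by blast
qed

lemma ker_AE_zero:
  assumes "representing_measure \<beta> \<mu>" "moment_matrix3 \<beta> *v a = 0"
  shows "AE z in \<mu>. poly_eval a z = 0"
proof -
  have sb: "sets \<mu> = sets borel" using assms(1) unfolding representing_measure_def by simp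
  have "0 = ip \<beta> a a" using assms(2) by (simp add: ip_def)
  also have "\<dots> = (\<integral>z. poly_eval a z * poly_eval a z \<partial>\<mu>)" by (rule ip_integral(2)[OF assms(1)])
  finally have "(\<integral>z. poly_eval a z * poly_eval a z \<partial>\<mu>) = 0" by simp
  then have "AE z in \<mu>. poly_eval a z * poly_eval a z = 0"
    using integral_nonneg_eq_0_iff_AE[OF ip_integral(1)[OF assms(1)]] by simp
  then show ?thesis by simp
qed

lemma dir1:
  assumes "representing_measure \<beta> \<mu>"
  shows "weakly_consistent (moment_matrix3 \<beta>)"
  unfolding weakly_consistent_def
proof (intro allI impI)
  fix a assume van: "\<forall>z\<in>variety (moment_matrix3 \<beta>). poly_eval a z = 0"
  let ?K = "{b. moment_matrix3 \<beta> *v b = 0}"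
  obtain Bk where Bk: "Bk \<subseteq> ?K" "independent Bk" "?K \<subseteq> span Bk"
    by (rule basis_exists)
  have fin: "finite Bk" using independent_bound[OF Bk(2)] by simp
  have "\<forall>b\<in>Bk. AE z in \<mu>. poly_eval b z = 0"
    using Bk(1) ker_AE_zero[OF assms] by blast
  then have "AE z in \<mu>. \<forall>b\<in>Bk. poly_eval b z = 0"
    by (subst AE_ball_countable[OF countable_finite[OF fin]])
  moreover have "z \<in> variety (moment_matrix3 \<beta>)" if z: "\<forall>b\<in>Bk. poly_eval b z = 0" for z
  proof -
    have "poly_eval b z = 0" if "b \<in> span Bk" for b
      using that
      by (induction rule: span_induct_alt)
         (auto simp: poly_eval_zero poly_eval_add poly_eval_scale z simp flip: scalar_mult_eq_scaleR)
    then have "\<forall>b. moment_matrix3 \<beta> *v b = 0 \<longrightarrow> poly_eval b z = 0" using Bk(3) by blast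
    then show ?thesis
      unfolding variety_def zero_set_def col_comb_eq by blast
  qed
  ultimately have ae: "AE z in \<mu>. poly_eval a z = 0"
    using van by (auto elim!: eventually_mono)
  have sb: "sets \<mu> = sets borel" using assms(1) unfolding representing_measure_def by simp
  have "(moment_matrix3 \<beta> *v a) $ r = 0" for r
  proof -
    have "(moment_matrix3 \<beta> *v a) $ r = ip \<beta> (axis r 1) a"
      unfolding ip_def by (subst inner_commute) (simp add: cart_eq_inner_axis)
    also have "\<dots> = (\<integral>z. poly_eval (axis r 1) z * poly_eval a z \<partial>\<mu>)"
      by (rule ip_integral(2)[OF assms(1)])
    also have "\<dots> = (\<integral>z. 0 \<partial>\<mu>)"
      using ae by (intro integral_cong_AE borel_measurable_times poly_eval_meas[OF sb]) (auto elim!: eventually_mono)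
    finally show ?thesis by simp
  qed
  then show "col_comb (moment_matrix3 \<beta>) a = 0"
    unfolding col_comb_eq by (simp add: vec_eq_iff)
qed

datatype bm = B1 | BX | BY | BXX | BXY | BYY | BXYY

lemma UNIV_bm: "(UNIV::bm set) = {B1, BX, BY, BXX, BXY, BYY, BXYY}"
  using bm.exhaust by auto

instance bm :: finite
  by standard (simp add: UNIV_bm)

lemma sum_bm: "(\<Sum>k\<in>UNIV. f k) = f B1 + f BX + f BY + f BXX + f BXY + f BYY + f BXYY"
  by (simp add: UNIV_bm algebra_simps)

lemma card_bm: "card (UNIV::bm set) = 7"
  by (simp add: UNIV_bm)

abbreviation Bset :: "mon3 set" where "Bset \<equiv> {M1, MX, MY, MXX, MXY, MYY, MXYY}"

fun bmon :: "bm \<Rightarrow> mon3" where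
  "bmon B1 = M1" | "bmon BX = MX" | "bmon BY = MY" | "bmon BXX = MXX" | "bmon BXY = MXY"
| "bmon BYY = MYY" | "bmon BXYY = MXYY"

lemma bmon_inj: "bmon k = bmon l \<longleftrightarrow> k = l"
  by (cases k; cases l) auto

lemma bmon_range: "range bmon = Bset"
  by (simp add: UNIV_bm)

definition emb :: "real^bm \<Rightarrow> real^mon3" where
  "emb g = (\<Sum>k\<in>UNIV. g$k *s axis (bmon k) 1)"

lemma emb_nth: "emb g $ m = (\<Sum>k\<in>UNIV. if m = bmon k then g$k else 0)"
  unfolding emb_def sum_component by (rule sum.cong) (auto simp: axis_def)

lemma emb_bmon[simp]: "emb g $ bmon k = g $ k"
  unfolding emb_nth by (simp add: bmon_inj)

lemma emb_out: "m \<notin> Bset \<Longrightarrow> emb g $ m = 0"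
  unfolding emb_nth sum_bm by auto

lemma vec_mon3_eqI:
  fixes a b :: "real^mon3"
  assumes "\<And>k. a $ bmon k = b $ bmon k" "\<And>m. m \<notin> Bset \<Longrightarrow> a $ m = b $ m"
  shows "a = b"
proof -
  have "a $ m = b $ m" for m
    using assms(1)[of B1] assms(1)[of BX] assms(1)[of BY] assms(1)[of BXX] assms(1)[of BXY]
      assms(1)[of BYY] assms(1)[of BXYY] assms(2)[of m]
    by (cases m) auto
  then show ?thesis by (simp add: vec_eq_iff)
qed

lemma emb_add: "emb (g + h) = emb g + emb h"
  by (rule vec_mon3_eqI) (simp_all add: emb_out)
lemma emb_scale: "emb (t *s g) = t *s emb g"
  by (rule vec_mon3_eqI) (simp_all add: emb_out)
lemma emb_diff: "emb (g - h) = emb g - emb h"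
  by (rule vec_mon3_eqI) (simp_all add: emb_out)
lemma emb_inj: assumes "emb g = emb h" shows "g = h"
proof -
  have "g $ k = h $ k" for k using emb_bmon[of g k] emb_bmon[of h k] assms by simp
  then show ?thesis by (simp add: vec_eq_iff)
qed

definition supB :: "real^mon3 \<Rightarrow> bool" where
  "supB a \<longleftrightarrow> (\<forall>m. m \<notin> Bset \<longrightarrow> a$m = 0)"

lemma supB_emb: assumes "supB a" shows "a = emb (\<chi> k. a $ bmon k)"
  using assms unfolding supB_def by (intro vec_mon3_eqI) (simp_all add: emb_out)

lemma supB_of_emb: "supB (emb g)"
  unfolding supB_def by (simp add: emb_out)

locale L =
  fixes \<beta> :: "nat \<Rightarrow> nat \<Rightarrow> real"
  assumes psdM: "psd (moment_matrix3 \<beta>)"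
    and cardV: "card (variety (moment_matrix3 \<beta>)) = 7"
    and cb: "cols_basis (moment_matrix3 \<beta>) Bset"
    and wc: "weakly_consistent (moment_matrix3 \<beta>)"
begin

abbreviation MM where "MM \<equiv> moment_matrix3 \<beta>"

definition BB :: "mon3 set" where "BB = Bset"
lemma finBB: "finite BB" by simp
lemma cb': "cols_basis MM BB" unfolding BB_def by (rule cb)
lemma supB_BB: "supB a \<Longrightarrow> m \<notin> BB \<Longrightarrow> a $ m = 0" unfolding supB_def BB_def by blast

lemma MM_sum_B: assumes "supB a" shows "MM *v a = (\<Sum>m\<in>BB. a$m *s column m MM)"
proof -
  have "MM *v a = (\<Sum>m\<in>UNIV. a$m *s column m MM)" by (rule matrix_mult_sum)
  also have "\<dots> = (\<Sum>m\<in>BB. a$m *s column m MM)"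
    using supB_BB[OF assms] by (intro sum.mono_neutral_right) auto
  finally show ?thesis .
qed

lemma kerB: assumes "supB a" "MM *v a = 0" shows "a = 0"
proof -
  let ?col = "\<lambda>m. column m MM"
  have cbd: "inj_on ?col BB \<and> independent (?col ` BB) \<and> span (?col ` BB) = span (columns MM)"
    using cb' unfolding cols_basis_def .
  have inj: "inj_on ?col BB" using cbd by (rule conjunct1)
  have ind: "independent (?col ` BB)" using cbd by blast
  let ?u = "\<lambda>v. a $ (inv_into BB ?col v)"
  have "(\<Sum>v\<in>?col ` BB. ?u v *\<^sub>R v) = (\<Sum>m\<in>BB. ?u (?col m) *\<^sub>R ?col m)"
    by (rule sum.reindex[OF inj, unfolded comp_def])
  also have "\<dots> = (\<Sum>m\<in>BB. a $ m *s ?col m)"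
    by (intro sum.cong refl) (simp add: inv_into_f_f[OF inj] scalar_mult_eq_scaleR)
  also have "\<dots> = 0" using MM_sum_B[OF assms(1)] assms(2) by simp
  finally have sum0: "(\<Sum>v\<in>?col ` BB. ?u v *\<^sub>R v) = 0" .
  have dep: "dependent (?col ` BB) = (\<exists>u. (\<exists>v\<in>?col ` BB. u v \<noteq> 0) \<and> (\<Sum>v\<in>?col ` BB. u v *\<^sub>R v) = 0)"
    by (rule dependent_finite[OF finite_imageI[OF finBB]])
  have u0: "\<forall>v\<in>?col ` BB. ?u v = 0"
  proof (rule ccontr)
    assume "\<not> (\<forall>v\<in>?col ` BB. ?u v = 0)"
    then have ex: "\<exists>v\<in>?col ` BB. ?u v \<noteq> 0" by blast
    have "\<exists>u. (\<exists>v\<in>?col ` BB. u v \<noteq> 0) \<and> (\<Sum>v\<in>?col ` BB. u v *\<^sub>R v) = 0"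
      by (rule exI[where x="?u"], rule conjI[OF ex sum0])
    then have "dependent (?col ` BB)" by (simp only: dep)
    with ind show False by (rule notE)
  qed
  have "a $ m = 0" for m
  proof (cases "m \<in> BB")
    case True
    then have "?u (?col m) = 0" using u0 by blast
    then show ?thesis using inv_into_f_f[OF inj True] by simp
  next
    case False
    then show ?thesis using supB_BB[OF assms(1)] by blast
  qed
  then show ?thesis by (simp add: vec_eq_iff)
qed

lemma r_exists: "\<exists>r. supB r \<and> MM *v r = MM *v axis m 1"
proof -
  let ?col = "\<lambda>m. column m MM"
  have cbd: "inj_on ?col BB \<and> independent (?col ` BB) \<and> span (?col ` BB) = span (columns MM)"
    using cb' unfolding cols_basis_def .
  have inj: "inj_on ?col BB" using cbd by (rule conjunct1)
  have sp: "span (?col ` BB) = span (columns MM)" using cbd by blast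
  have "?col m \<in> columns MM" by (auto simp: columns_def)
  then have "?col m \<in> span (?col ` BB)"
    unfolding sp by (rule span_base)
  then obtain u where u: "?col m = (\<Sum>v\<in>?col ` BB. u v *\<^sub>R v)"
    unfolding span_finite[OF finite_imageI[OF finBB]] by blast
  also have "\<dots> = (\<Sum>k\<in>BB. u (?col k) *\<^sub>R ?col k)"
    by (rule sum.reindex[OF inj, unfolded comp_def])
  finally have u': "?col m = (\<Sum>k\<in>BB. u (?col k) *s ?col k)"
    by (simp add: scalar_mult_eq_scaleR)
  define r where "r = (\<chi> k. if k \<in> BB then u (?col k) else 0)"
  have sr: "supB r" unfolding supB_def r_def BB_def by simp
  have "MM *v r = (\<Sum>k\<in>BB. r$k *s ?col k)" by (rule MM_sum_B[OF sr])
  also have "\<dots> = (\<Sum>k\<in>BB. u (?col k) *s ?col k)"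
    by (intro sum.cong refl) (simp add: r_def)
  also have "\<dots> = MM *v axis m 1" using u' by (simp add: matrix_vector_mult_basis)
  finally show ?thesis using sr by blast
qed

lemma finV: "finite (variety MM)"
  using cardV by (intro card_ge_0_finite) simp

definition pts :: "bm \<Rightarrow> real \<times> real" where
  "pts = (SOME h. bij_betw h UNIV (variety MM))"

lemma pts_bij: "bij_betw pts UNIV (variety MM)"
proof -
  have "\<exists>h. bij_betw h (UNIV::bm set) (variety MM)"
    using finV cardV card_bm by (intro finite_same_card_bij) auto
  then show ?thesis unfolding pts_def by (rule someI_ex)
qed

lemma pts_inj: "pts i = pts j \<Longrightarrow> i = j"
  using pts_bij unfolding bij_betw_def inj_on_def by blast

lemma van: assumes "MM *v a = 0" shows "poly_eval a (pts i) = 0"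
proof -
  have "pts i \<in> variety MM" using pts_bij unfolding bij_betw_def by blast
  then show ?thesis using assms unfolding variety_def zero_set_def col_comb_eq by blast
qed

lemma wc': assumes "\<And>i. poly_eval a (pts i) = 0" shows "MM *v a = 0"
proof -
  have "\<forall>z\<in>variety MM. poly_eval a z = 0"
  proof
    fix z assume "z \<in> variety MM"
    then obtain i where "z = pts i" using pts_bij unfolding bij_betw_def by blast
    then show "poly_eval a z = 0" using assms by simp
  qed
  then show ?thesis using wc unfolding weakly_consistent_def col_comb_eq by blast
qed

definition E :: "real^mon3 \<Rightarrow> real^bm" where
  "E a = (\<chi> i. poly_eval a (pts i))"

lemma E_nth: "E a $ i = poly_eval a (pts i)" unfolding E_def by simp
lemma E_add: "E (a + b) = E a + E b" by (simp add: vec_eq_iff E_nth poly_eval_add)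
lemma E_diff: "E (a - b) = E a - E b" by (simp add: vec_eq_iff E_nth poly_eval_diff)
lemma E_scale: "E (t *s a) = t *s E a" by (simp add: vec_eq_iff E_nth poly_eval_scale)
lemma E_zero: "E 0 = 0" by (simp add: vec_eq_iff E_nth poly_eval_zero)
lemma E_sum: "finite I \<Longrightarrow> E (\<Sum>i\<in>I. f i) = (\<Sum>i\<in>I. E (f i))"
  by (simp add: vec_eq_iff E_nth poly_eval_sum sum_component)

lemma E_ker: "E a = 0 \<longleftrightarrow> MM *v a = 0"
  using van wc' by (auto simp: vec_eq_iff E_nth)

definition Eb :: "real^bm \<Rightarrow> real^bm" where "Eb g = E (emb g)"

lemma Eb_linear: "linear Eb"
  by (rule linearI) (simp_all add: Eb_def emb_add E_add emb_scale[unfolded scalar_mult_eq_scaleR]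
       E_scale[unfolded scalar_mult_eq_scaleR])

lemma Eb_inj: "inj Eb"
proof (rule injI)
  fix g h assume "Eb g = Eb h"
  then have "E (emb (g - h)) = 0" by (simp add: Eb_def emb_diff E_diff)
  then have "emb (g - h) = 0" using kerB[OF supB_of_emb] E_ker by blast
  also have "0 = emb 0" by (rule vec_mon3_eqI) (simp_all add: emb_out)
  finally show "g = h" using emb_inj by fastforce
qed

lemma Eb_surj: "surj Eb"
  by (rule linear_injective_imp_surjective[OF Eb_linear Eb_inj]) simp

lemma E_onto: "\<exists>f. supB f \<and> E f = v"
proof -
  obtain g where "v = Eb g" using Eb_surj by blast
  then show ?thesis using supB_of_emb unfolding Eb_def by blast
qed

definition q :: "bm \<Rightarrow> real^mon3" where
  "q i = (SOME f. supB f \<and> E f = axis i 1)"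

lemma q_prop: "supB (q i)" "E (q i) = axis i 1"
  using someI_ex[OF E_onto[of "axis i 1"]] unfolding q_def by auto

definition W :: "bm \<Rightarrow> bm \<Rightarrow> real" where "W i j = ip \<beta> (q i) (q j)"

lemma W_sym: "W i j = W j i" unfolding W_def by (rule ip_sym)

definition Bf :: "real^bm \<Rightarrow> real^bm \<Rightarrow> real" where
  "Bf u w = (\<Sum>i\<in>UNIV. \<Sum>j\<in>UNIV. u$i * w$j * W i j)"

lemma expand_q: "MM *v (f - (\<Sum>i\<in>UNIV. E f $ i *s q i)) = 0"
proof -
  have "E (\<Sum>i\<in>UNIV. E f $ i *s q i) = (\<Sum>i\<in>UNIV. E f $ i *s axis i 1)"
    by (simp add: E_sum E_scale q_prop)
  also have "\<dots> = E f" by (rule basis_expansion)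
  finally have "E (f - (\<Sum>i\<in>UNIV. E f $ i *s q i)) = 0" by (simp add: E_diff)
  then show ?thesis using E_ker by blast
qed

lemma KI: "ip \<beta> f g = Bf (E f) (E g)"
proof -
  let ?f = "\<Sum>i\<in>UNIV. E f $ i *s q i" and ?g = "\<Sum>j\<in>UNIV. E g $ j *s q j"
  have "ip \<beta> f g = ip \<beta> ?f g + ip \<beta> (f - ?f) g" by (simp add: ip_diff1)
  also have "ip \<beta> (f - ?f) g = 0" by (rule ip_ker1[OF expand_q])
  also have "ip \<beta> ?f g = ip \<beta> ?f ?g + ip \<beta> ?f (g - ?g)" by (simp add: ip_diff2)
  also have "ip \<beta> ?f (g - ?g) = 0" by (rule ip_ker2[OF expand_q])
  also have "ip \<beta> ?f ?g = Bf (E f) (E g)"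
    unfolding Bf_def W_def
    by (simp add: ip_sum1 ip_sum2 ip_scale1 ip_scale2 sum_distrib_left mult.assoc)
       (subst sum.swap, simp add: ac_simps)
  finally show ?thesis by simp
qed

end

definition deg2 :: "real^mon3 \<Rightarrow> bool" where
  "deg2 a \<longleftrightarrow> a$MXXX = 0 \<and> a$MXXY = 0 \<and> a$MXYY = 0 \<and> a$MYYY = 0"

definition shx :: "real^mon3 \<Rightarrow> real^mon3" where
  "shx a = (\<chi> m. if m = MX then a$M1 else if m = MXX then a$MX else if m = MXY then a$MY
     else if m = MXXX then a$MXX else if m = MXXY then a$MXY else if m = MXYY then a$MYY else 0)"

definition shy :: "real^mon3 \<Rightarrow> real^mon3" where
  "shy a = (\<chi> m. if m = MY then a$M1 else if m = MXY then a$MX else if m = MYY then a$MY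
     else if m = MXXY then a$MXX else if m = MXYY then a$MXY else if m = MYYY then a$MYY else 0)"

lemma shx_nth[simp]: "shx a $ M1 = 0" "shx a $ MX = a$M1" "shx a $ MY = 0" "shx a $ MXX = a$MX"
  "shx a $ MXY = a$MY" "shx a $ MYY = 0" "shx a $ MXXX = a$MXX" "shx a $ MXXY = a$MXY"
  "shx a $ MXYY = a$MYY" "shx a $ MYYY = 0"
  unfolding shx_def by simp_all

lemma shy_nth[simp]: "shy a $ M1 = 0" "shy a $ MX = 0" "shy a $ MY = a$M1" "shy a $ MXX = 0"
  "shy a $ MXY = a$MX" "shy a $ MYY = a$MY" "shy a $ MXXX = 0" "shy a $ MXXY = a$MXX"
  "shy a $ MXYY = a$MXY" "shy a $ MYYY = a$MYY"
  unfolding shy_def by simp_all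

lemma axis_nth_mon3[simp]: "axis m (1::real) $ m' = (if m' = m then 1 else 0)"
  by (simp add: axis_def)

lemma poly_eval_shx: "deg2 a \<Longrightarrow> poly_eval (shx a) z = fst z * poly_eval a z"
  unfolding poly_eval_def sum_mon3 deg2_def by (simp add: algebra_simps power2_eq_square power3_eq_cube)

lemma poly_eval_shy: "deg2 a \<Longrightarrow> poly_eval (shy a) z = snd z * poly_eval a z"
  unfolding poly_eval_def sum_mon3 deg2_def by (simp add: algebra_simps power2_eq_square power3_eq_cube)

lemma ip_axis2: "ip \<beta> a (axis c 1) = (\<Sum>r\<in>UNIV. a$r * \<beta> (fst(expo r)+fst(expo c)) (snd(expo r)+snd(expo c)))"
proof -
  have "(\<Sum>ca\<in>UNIV. a $ r * axis c 1 $ ca * \<beta> (fst (expo r) + fst (expo ca)) (snd (expo r) + snd (expo ca)))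
      = a$r * \<beta> (fst(expo r)+fst(expo c)) (snd(expo r)+snd(expo c))" for r
    by (subst sum.remove[of _ c]) auto
  then show ?thesis unfolding ip_expand by simp
qed

lemma hankel_x: "deg2 f \<Longrightarrow> deg2 g \<Longrightarrow> ip \<beta> (shx f) g = ip \<beta> f (shx g)"
  unfolding ip_expand sum_mon3 deg2_def by (simp add: algebra_simps eval_nat_numeral)

lemma hankel_y: "deg2 f \<Longrightarrow> deg2 g \<Longrightarrow> ip \<beta> (shy f) g = ip \<beta> f (shy g)"
  unfolding ip_expand sum_mon3 deg2_def by (simp add: algebra_simps eval_nat_numeral)

lemma hankel6a: "deg2 f \<Longrightarrow> ip \<beta> (shx f) (axis MXYY 1) = ip \<beta> (shy f) (axis MXXY 1)"
  unfolding ip_axis2 sum_mon3 deg2_def by (simp add: algebra_simps eval_nat_numeral)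

lemma hankel6b: "deg2 f \<Longrightarrow> ip \<beta> (shy f) (axis MXYY 1) = ip \<beta> (shx f) (axis MYYY 1)"
  unfolding ip_axis2 sum_mon3 deg2_def by (simp add: algebra_simps eval_nat_numeral)

context L begin

definition r2 where "r2 = (SOME r. supB r \<and> MM *v r = MM *v axis MXXY 1)"
definition r3 where "r3 = (SOME r. supB r \<and> MM *v r = MM *v axis MYYY 1)"

lemma r2_prop: "supB r2" "MM *v r2 = MM *v axis MXXY 1"
  using someI_ex[OF r_exists[of MXXY]] unfolding r2_def by auto
lemma r3_prop: "supB r3" "MM *v r3 = MM *v axis MYYY 1"
  using someI_ex[OF r_exists[of MYYY]] unfolding r3_def by auto

abbreviation e :: "real^mon3" where "e \<equiv> axis MXYY 1"

definition cc where "cc = r2 $ MXYY"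
definition dd where "dd = r3 $ MXYY"
definition r2' where "r2' = r2 - cc *s e"
definition r3' where "r3' = r3 - dd *s e"

lemma supB_deg3: "supB a \<Longrightarrow> a $ MXXX = 0 \<and> a $ MXXY = 0 \<and> a $ MYYY = 0"
  unfolding supB_def by simp

lemma r2'_deg2: "deg2 r2'"
  using supB_deg3[OF r2_prop(1)] unfolding deg2_def r2'_def cc_def by simp
lemma r3'_deg2: "deg2 r3'"
  using supB_deg3[OF r3_prop(1)] unfolding deg2_def r3'_def dd_def by simp

lemma r2_split: "r2 = r2' + cc *s e" unfolding r2'_def by simp
lemma r3_split: "r3 = r3' + dd *s e" unfolding r3'_def by simp

lemma E_r2: "E (axis MXXY 1) = E r2"
proof -
  have "MM *v (axis MXXY 1 - r2) = 0" using r2_prop(2) by (simp add: matrix_vector_mult_diff_distrib)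
  then have "E (axis MXXY 1 - r2) = 0" using E_ker by blast
  then show ?thesis by (simp add: E_diff)
qed
lemma E_r3: "E (axis MYYY 1) = E r3"
proof -
  have "MM *v (axis MYYY 1 - r3) = 0" using r3_prop(2) by (simp add: matrix_vector_mult_diff_distrib)
  then have "E (axis MYYY 1 - r3) = 0" using E_ker by blast
  then show ?thesis by (simp add: E_diff)
qed
lemma ip_r2: "ip \<beta> f (axis MXXY 1) = ip \<beta> f r2" unfolding ip_def using r2_prop(2) by simp
lemma ip_r3: "ip \<beta> f (axis MYYY 1) = ip \<beta> f r3" unfolding ip_def using r3_prop(2) by simp

definition X where "X i = fst (pts i)"
definition Y where "Y i = snd (pts i)"
definition hx :: "real^bm \<Rightarrow> real^bm" where "hx u = (\<chi> i. X i * u$i)"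
definition hy :: "real^bm \<Rightarrow> real^bm" where "hy u = (\<chi> i. Y i * u$i)"

lemma hx_add: "hx (u + v) = hx u + hx v" unfolding hx_def by (simp add: vec_eq_iff algebra_simps)
lemma hy_add: "hy (u + v) = hy u + hy v" unfolding hy_def by (simp add: vec_eq_iff algebra_simps)
lemma hx_scale: "hx (t *s u) = t *s hx u" unfolding hx_def by (simp add: vec_eq_iff algebra_simps)
lemma hy_scale: "hy (t *s u) = t *s hy u" unfolding hy_def by (simp add: vec_eq_iff algebra_simps)

lemma E_shx: "deg2 f \<Longrightarrow> E (shx f) = hx (E f)"
  by (simp add: vec_eq_iff E_nth hx_def X_def poly_eval_shx)
lemma E_shy: "deg2 f \<Longrightarrow> E (shy f) = hy (E f)"
  by (simp add: vec_eq_iff E_nth hy_def Y_def poly_eval_shy)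

lemma E_axis_nth: "E (axis m 1) $ i = X i ^ fst (expo m) * Y i ^ snd (expo m)"
  by (simp add: E_nth poly_eval_axis X_def Y_def)

definition QQ :: "real^bm" where "QQ = (\<chi> i. X i ^ 2 * Y i ^ 2)"

lemma hx_Ee: "hx (E e) = QQ"
  by (simp add: vec_eq_iff hx_def QQ_def E_axis_nth power2_eq_square)

lemma QQ_eq1: "QQ = E (shy r2') + cc *s hy (E e)"
proof -
  have "QQ = hy (E (axis MXXY 1))"
    by (simp add: vec_eq_iff hy_def QQ_def E_axis_nth power2_eq_square)
  also have "\<dots> = hy (E r2)" by (simp add: E_r2)
  also have "\<dots> = E (shy r2') + cc *s hy (E e)"
    by (simp add: r2_split E_add E_scale hy_add hy_scale E_shy[OF r2'_deg2])
  finally show ?thesis .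
qed

lemma hyEe_eq: "hy (E e) = E (shx r3') + dd *s QQ"
proof -
  have "hy (E e) = hx (E (axis MYYY 1))"
    by (simp add: vec_eq_iff hy_def hx_def E_axis_nth power2_eq_square power3_eq_cube)
  also have "\<dots> = hx (E r3)" by (simp add: E_r3)
  also have "\<dots> = E (shx r3') + dd *s QQ"
    by (simp add: r3_split E_add E_scale hx_add hx_scale E_shx[OF r3'_deg2] hx_Ee)
  finally show ?thesis .
qed

lemma Bf_add2: "Bf u (v + w) = Bf u v + Bf u w"
  unfolding Bf_def by (simp add: algebra_simps sum.distrib)
lemma Bf_scale2: "Bf u (t *s w) = t * Bf u w"
  unfolding Bf_def by (simp add: algebra_simps sum_distrib_left)

definition Lam where "Lam f = ip \<beta> (shx f) e"
definition TT where "TT f = Bf (E f) QQ"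

lemma Lam_eq: assumes "deg2 f"
  shows "Lam f = ip \<beta> f (shy r2') + cc * (ip \<beta> f (shx r3') + dd * Lam f)"
proof -
  have "Lam f = ip \<beta> (shy f) (axis MXXY 1)" unfolding Lam_def by (rule hankel6a[OF assms])
  also have "\<dots> = ip \<beta> (shy f) r2" by (rule ip_r2)
  also have "\<dots> = ip \<beta> (shy f) r2' + cc * ip \<beta> (shy f) e"
    by (simp add: r2_split ip_add2 ip_scale2)
  also have "ip \<beta> (shy f) r2' = ip \<beta> f (shy r2')" by (rule hankel_y[OF assms r2'_deg2])
  also have "ip \<beta> (shy f) e = ip \<beta> (shx f) (axis MYYY 1)" by (rule hankel6b[OF assms])
  also have "\<dots> = ip \<beta> (shx f) r3" by (rule ip_r3)
  also have "\<dots> = ip \<beta> (shx f) r3' + dd * Lam f"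
    by (simp add: r3_split ip_add2 ip_scale2 Lam_def)
  also have "ip \<beta> (shx f) r3' = ip \<beta> f (shx r3')" by (rule hankel_x[OF assms r3'_deg2])
  finally show ?thesis .
qed

lemma TT_eq: "TT f = ip \<beta> f (shy r2') + cc * (ip \<beta> f (shx r3') + dd * TT f)"
proof -
  have "TT f = Bf (E f) (E (shy r2') + cc *s (E (shx r3') + dd *s QQ))"
    unfolding TT_def by (subst QQ_eq1) (simp add: hyEe_eq)
  also have "\<dots> = ip \<beta> f (shy r2') + cc * (ip \<beta> f (shx r3') + dd * TT f)"
    by (simp add: Bf_add2 Bf_scale2 KI TT_def algebra_simps)
  finally show ?thesis .
qed

end

definition zf :: "real^'n^'n \<Rightarrow> real^'n \<Rightarrow> real^'n \<Rightarrow> real" where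
  "zf Z u w = u \<bullet> (Z *v w)"

lemma zf_expand: "zf Z u w = (\<Sum>i\<in>UNIV. \<Sum>j\<in>UNIV. u$i * Z$i$j * w$j)"
  unfolding zf_def inner_vec_def matrix_vector_mult_def by (simp add: sum_distrib_left mult.assoc)

lemma zf_add1: "zf Z (u + v) w = zf Z u w + zf Z v w" unfolding zf_def by (simp add: inner_add_left)
lemma zf_add2: "zf Z u (v + w) = zf Z u v + zf Z u w"
  unfolding zf_def by (simp add: matrix_vector_right_distrib inner_add_right)
lemma zf_scale1: "zf Z (t *s u) w = t * zf Z u w" unfolding zf_def by (simp add: scalar_mult_eq_scaleR)
lemma zf_scale2: "zf Z u (t *s w) = t * zf Z u w"
  unfolding zf_def by (simp add: scalar_mult_eq_scaleR matrix_vector_mult_scaleR)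
lemma zf_axis: "zf Z (axis i 1) (axis j 1) = Z$i$j"
  unfolding zf_def by (simp add: matrix_vector_mult_basis inner_axis' column_def)

lemma zf_antisym:
  assumes "\<And>i j. Z$i$j = - Z$j$i"
  shows "zf Z u w = - zf Z w u"
proof -
  have "zf Z u w = (\<Sum>i\<in>UNIV. \<Sum>j\<in>UNIV. - (w$j * Z$j$i * u$i))"
  proof -
    have "u$i * Z$i$j * w$j = - (w$j * Z$j$i * u$i)" for i j using assms[of i j] by simp
    then show ?thesis unfolding zf_expand by simp
  qed
  also have "\<dots> = - zf Z w u"
    unfolding zf_expand by (subst sum.swap) (simp add: sum_negf)
  finally show ?thesis .
qed

lemma zf_diag: assumes "\<And>i j. Z$i$j = - Z$j$i" shows "zf Z u u = 0"
  using zf_antisym[OF assms, of u u] by simp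

context L begin

lemma E_decomp: "\<exists>g t. deg2 g \<and> v = E g + t *s E e"
proof -
  obtain f where f: "supB f" "E f = v" using E_onto by blast
  let ?g = "f - f$MXYY *s e"
  have "deg2 ?g" using supB_deg3[OF f(1)] unfolding deg2_def by simp
  moreover have "v = E ?g + f$MXYY *s E e" using f(2) by (simp add: E_diff E_scale)
  ultimately show ?thesis by blast
qed

lemma GL:
  assumes anti: "\<And>i j. Z$i$j = - Z$j$i"
    and c1: "\<And>f g. deg2 f \<Longrightarrow> deg2 g \<Longrightarrow> zf Z (E f) (E g) = 0"
    and c2: "\<And>f. deg2 f \<Longrightarrow> zf Z (E f) (E e) = 0"
  shows "Z $ i $ j = 0"
proof -
  have "zf Z u w = 0" for u w
  proof -
    obtain g s where g: "deg2 g" "u = E g + s *s E e" using E_decomp by blast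
    obtain h t where h: "deg2 h" "w = E h + t *s E e" using E_decomp by blast
    have "zf Z (E e) (E h) = 0" using zf_antisym[OF anti, of "E e" "E h"] c2[OF h(1)] by simp
    then show ?thesis
      unfolding g(2) h(2)
      by (simp add: zf_add1 zf_add2 zf_scale1 zf_scale2 c1[OF g(1) h(1)] c2[OF g(1)] zf_diag[OF anti])
  qed
  then show ?thesis using zf_axis[of Z i j] by simp
qed

definition ZC :: "real^bm^bm" where "ZC = (\<chi> i j. (X i - X j) * W i j)"
definition ZD :: "real^bm^bm" where "ZD = (\<chi> i j. (Y i - Y j) * W i j)"

lemma ZC_anti: "ZC$i$j = - ZC$j$i" unfolding ZC_def by (simp add: W_sym[of j i] algebra_simps)
lemma ZD_anti: "ZD$i$j = - ZD$j$i" unfolding ZD_def by (simp add: W_sym[of j i] algebra_simps)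

lemma ZC_form: "zf ZC u w = Bf (hx u) w - Bf u (hx w)"
  unfolding zf_expand Bf_def ZC_def hx_def
  by (simp add: sum_subtractf[symmetric] algebra_simps)
lemma ZD_form: "zf ZD u w = Bf (hy u) w - Bf u (hy w)"
  unfolding zf_expand Bf_def ZD_def hy_def
  by (simp add: sum_subtractf[symmetric] algebra_simps)

lemma ZC_c1: "deg2 f \<Longrightarrow> deg2 g \<Longrightarrow> zf ZC (E f) (E g) = 0"
  by (simp add: ZC_form E_shx[symmetric] KI[symmetric] hankel_x)
lemma ZD_c1: "deg2 f \<Longrightarrow> deg2 g \<Longrightarrow> zf ZD (E f) (E g) = 0"
  by (simp add: ZD_form E_shy[symmetric] KI[symmetric] hankel_y)

lemma ZC_c2: "deg2 f \<Longrightarrow> zf ZC (E f) (E e) = Lam f - TT f"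
  by (simp add: ZC_form E_shx[symmetric] KI[symmetric] hx_Ee Lam_def TT_def)

lemma ZD_c2: assumes "deg2 f" shows "zf ZD (E f) (E e) = dd * (Lam f - TT f)"
proof -
  have "ip \<beta> (shy f) e = ip \<beta> (shx f) r3" using hankel6b[OF assms] ip_r3 by simp
  also have "\<dots> = ip \<beta> f (shx r3') + dd * Lam f"
    by (simp add: r3_split ip_add2 ip_scale2 Lam_def hankel_x[OF assms r3'_deg2])
  finally have 1: "ip \<beta> (shy f) e = ip \<beta> f (shx r3') + dd * Lam f" .
  have "zf ZD (E f) (E e) = ip \<beta> (shy f) e - Bf (E f) (E (shx r3') + dd *s QQ)"
    by (simp add: ZD_form E_shy[symmetric, OF assms] KI[symmetric] hyEe_eq)
  also have "\<dots> = dd * (Lam f - TT f)"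
    by (simp add: 1 Bf_add2 Bf_scale2 KI[symmetric] TT_def algebra_simps)
  finally show ?thesis .
qed

lemma pts_XY: "pts i = (X i, Y i)" unfolding X_def Y_def by simp

lemma W_off_ZCZD: assumes "i \<noteq> j" "ZC$i$j = 0" "ZD$i$j = 0" shows "W i j = 0"
proof -
  have "X i \<noteq> X j \<or> Y i \<noteq> Y j" using pts_inj assms(1) pts_XY by metis
  then show ?thesis using assms(2,3) unfolding ZC_def ZD_def by auto
qed

lemma case_ne1: assumes "cc * dd \<noteq> 1" "i \<noteq> j" shows "W i j = 0"
proof -
  have LT: "Lam f = TT f" if "deg2 f" for f
  proof -
    have "(1 - cc * dd) * (Lam f - TT f) = 0"
      using Lam_eq[OF that] TT_eq[of f] by (simp add: algebra_simps)
    then show ?thesis using assms(1) by simp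
  qed
  have "ZC$i$j = 0" by (rule GL[OF ZC_anti ZC_c1]) (simp_all add: ZC_c2 LT)
  moreover have "ZD$i$j = 0" by (rule GL[OF ZD_anti ZD_c1]) (simp_all add: ZD_c2 LT)
  ultimately show ?thesis by (rule W_off_ZCZD[OF assms(2)])
qed

lemma case_eq1: assumes "cc * dd = 1" shows "((Y i - Y j) - dd * (X i - X j)) * W i j = 0"
proof -
  define Z3 :: "real^bm^bm" where "Z3 = (\<chi> i j. ZD$i$j - dd * ZC$i$j)"
  have zf3: "zf Z3 u w = zf ZD u w - dd * zf ZC u w" for u w
    unfolding zf_expand Z3_def by (simp add: sum_subtractf[symmetric] sum_distrib_left algebra_simps)
  have "Z3$i$j = 0"
  proof (rule GL)
    show "Z3$a$b = - Z3$b$a" for a b unfolding Z3_def using ZC_anti[of a b] ZD_anti[of a b] by simp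
    show "zf Z3 (E f) (E g) = 0" if "deg2 f" "deg2 g" for f g
      using that by (simp add: zf3 ZC_c1 ZD_c1)
    show "zf Z3 (E f) (E e) = 0" if "deg2 f" for f
      using that by (simp add: zf3 ZC_c2 ZD_c2)
  qed
  then show ?thesis unfolding Z3_def ZC_def ZD_def by (simp add: algebra_simps)
qed

end

lemma line_poly: "\<exists>P. degree P \<le> 3 \<and> (\<forall>x. poly P x = poly_eval a (x, d*x + c0))"
proof -
  define P where "P = (\<Sum>m\<in>UNIV. smult (a$m) ([:0,1:]^fst(expo m) * [:c0,d:]^snd(expo m)))"
  have "degree (smult (a$m) ([:0,1:]^fst(expo m) * [:c0,d:]^snd(expo m))) \<le> 3" for m :: mon3
  proof -
    have d1: "degree ([:0,1:]^fst(expo m) :: real poly) \<le> fst (expo m)"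
      using degree_power_le[of "[:0,1:]::real poly" "fst (expo m)"] by simp
    have "degree ([:c0,d:] :: real poly) \<le> 1" by simp
    then have "degree ([:c0,d:] :: real poly) * snd (expo m) \<le> 1 * snd (expo m)"
      by (rule mult_le_mono1)
    then have d2: "degree ([:c0,d:]^snd(expo m)) \<le> snd (expo m)"
      using degree_power_le[of "[:c0,d:]" "snd (expo m)"] by (simp only: mult_1)
    have "degree (smult (a$m) ([:0,1:]^fst(expo m) * [:c0,d:]^snd(expo m)))
        \<le> degree ([:0,1:]^fst(expo m) * [:c0,d:]^snd(expo m))" by (rule degree_smult_le)
    also have "\<dots> \<le> fst (expo m) + snd (expo m)"
      using degree_mult_le[of "[:0,1:]^fst(expo m)" "[:c0,d:]^snd(expo m)"] d1 d2 by linarith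
    also have "\<dots> \<le> 3" by (rule expo_deg)
    finally show ?thesis .
  qed
  then have "degree P \<le> 3" unfolding P_def by (intro degree_sum_le) auto
  moreover have "poly P x = poly_eval a (x, d*x + c0)" for x
  proof -
    have e: "c0 + x * d = d*x + c0" by simp
    show ?thesis
      unfolding P_def poly_eval_def poly_sum by (intro sum.cong refl) (simp add: poly_power e)
  qed
  ultimately show ?thesis by blast
qed

lemma poly_to_vec:
  fixes P :: "real poly"
  assumes "degree P \<le> 2"
  shows "\<exists>f. deg2 f \<and> (\<forall>z. poly_eval f z = poly P (fst z))"
proof -
  define f where "f = coeff P 0 *s axis M1 1 + coeff P 1 *s axis MX 1 + coeff P 2 *s axis MXX 1"
  have "deg2 f" unfolding f_def deg2_def by simp
  moreover have "poly_eval f z = poly P (fst z)" for z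
  proof -
    have "poly P (fst z) = (\<Sum>i\<le>degree P. coeff P i * fst z ^ i)" by (rule poly_altdef)
    also have "\<dots> = (\<Sum>i\<le>2. coeff P i * fst z ^ i)"
      using assms by (intro sum.mono_neutral_left) (auto simp: coeff_eq_0)
    also have "\<dots> = coeff P 0 + coeff P 1 * fst z + coeff P 2 * fst z ^ 2"
      by (simp add: numeral_2_eq_2)
    finally show ?thesis unfolding f_def poly_eval_def sum_mon3 by simp
  qed
  ultimately show ?thesis by blast
qed

lemma deg2_supB: "deg2 f \<Longrightarrow> supB f"
  unfolding supB_def deg2_def
proof (intro allI impI)
  fix m assume "f $ MXXX = 0 \<and> f $ MXXY = 0 \<and> f $ MXYY = 0 \<and> f $ MYYY = 0" "m \<notin> Bset"
  then show "f $ m = 0" by (cases m) simp_all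
qed

context L begin

definition phi :: "real^bm \<Rightarrow> real" where "phi v = inv Eb v $ BXYY"

lemma Eb_inv: "Eb (inv Eb v) = v" using Eb_surj by (simp add: surj_f_inv_f)
lemma inv_Eb: "inv Eb (Eb g) = g" using Eb_inj by (simp add: inv_f_f)
lemma Eb_add: "Eb (g + h) = Eb g + Eb h" by (simp add: Eb_def emb_add E_add)
lemma Eb_scale: "Eb (t *s g) = t *s Eb g" by (simp add: Eb_def emb_scale E_scale)

lemma invEb_add: "inv Eb (u + v) = inv Eb u + inv Eb v"
proof -
  have "Eb (inv Eb u + inv Eb v) = u + v" by (simp add: Eb_add Eb_inv)
  then show ?thesis by (metis inv_Eb)
qed
lemma invEb_scale: "inv Eb (t *s v) = t *s inv Eb v"
proof -
  have "Eb (t *s inv Eb v) = t *s v" by (simp add: Eb_scale Eb_inv)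
  then show ?thesis by (metis inv_Eb)
qed

lemma phi_add: "phi (u + v) = phi u + phi v" unfolding phi_def by (simp add: invEb_add)
lemma phi_scale: "phi (t *s v) = t * phi v" unfolding phi_def by (simp add: invEb_scale)
lemma phi_zero: "phi 0 = 0" using phi_scale[of 0 0] by simp
lemma phi_sum: "finite I \<Longrightarrow> phi (\<Sum>i\<in>I. f i) = (\<Sum>i\<in>I. phi (f i))"
  by (induction I rule: finite_induct) (simp_all add: phi_zero phi_add)

lemma phi_expand: "phi v = (\<Sum>k\<in>UNIV. v$k * phi (axis k 1))"
proof -
  have "phi v = phi (\<Sum>k\<in>UNIV. v$k *s axis k 1)" by (simp add: basis_expansion)
  also have "\<dots> = (\<Sum>k\<in>UNIV. v$k * phi (axis k 1))" by (simp add: phi_sum phi_scale)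
  finally show ?thesis .
qed

lemma phi_zero_iff: "phi v = 0 \<longleftrightarrow> (\<exists>f. deg2 f \<and> E f = v)"
proof
  assume "phi v = 0"
  let ?g = "inv Eb v"
  have "E (emb ?g) = v" using Eb_inv[of v] by (simp add: Eb_def)
  moreover have "deg2 (emb ?g)"
  proof -
    have "emb ?g $ MXYY = 0" using emb_bmon[of ?g BXYY] \<open>phi v = 0\<close> by (simp add: phi_def)
    then show ?thesis unfolding deg2_def by (simp add: emb_out)
  qed
  ultimately show "\<exists>f. deg2 f \<and> E f = v" by blast
next
  assume "\<exists>f. deg2 f \<and> E f = v"
  then obtain f where f: "deg2 f" "E f = v" by blast
  let ?g = "\<chi> k. f $ bmon k"
  have fe: "f = emb ?g" by (rule supB_emb[OF deg2_supB[OF f(1)]])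
  have "Eb ?g = v" using f(2) fe by (simp add: Eb_def)
  then have "inv Eb v = ?g" using inv_Eb by metis
  then show "phi v = 0" using f(1) unfolding phi_def deg2_def by simp
qed

lemma phi_Ee: "phi (E e) = 1"
proof -
  let ?g = "\<chi> k. e $ bmon k"
  have sB: "supB e" unfolding supB_def by simp
  have "Eb ?g = E e" using supB_emb[OF sB] by (simp add: Eb_def)
  then have "inv Eb (E e) = ?g" using inv_Eb by metis
  then show ?thesis unfolding phi_def by simp
qed

lemma line_bound:
  assumes "\<forall>k\<in>S. Y k = dd * X k + c0" "inj_on X S"
  shows "card S \<le> 3"
proof (rule ccontr)
  assume "\<not> card S \<le> 3"
  then have c4: "4 \<le> card S" by simp
  have vl: "poly_eval a (x, dd*x + c0) = 0" if a: "MM *v a = 0" for a x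
  proof -
    obtain P where P: "degree P \<le> 3" "\<forall>x. poly P x = poly_eval a (x, dd*x + c0)"
      using line_poly by blast
    have "P = 0"
    proof (rule ccontr)
      assume "P \<noteq> 0"
      have sub: "X ` S \<subseteq> {x. poly P x = 0}"
      proof
        fix x assume "x \<in> X ` S"
        then obtain k where k: "k \<in> S" "x = X k" by blast
        have "poly P x = poly_eval a (pts k)" using P(2) assms(1) k pts_XY[of k] by simp
        then show "x \<in> {x. poly P x = 0}" using van[OF a] by simp
      qed
      have "card (X ` S) \<le> card {x. poly P x = 0}"
        by (rule card_mono[OF poly_roots_finite[OF \<open>P \<noteq> 0\<close>] sub])
      also have "\<dots> \<le> 3" using card_poly_roots_bound[OF \<open>P \<noteq> 0\<close>] P(1) by linarith
      finally show False using card_image[OF assms(2)] c4 by linarith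
    qed
    then show ?thesis using P(2) by simp
  qed
  have "range (\<lambda>x. (x, dd*x + c0)) \<subseteq> variety MM"
    unfolding variety_def zero_set_def col_comb_eq using vl by blast
  moreover have "infinite (range (\<lambda>x::real. (x, dd*x + c0)))"
  proof
    assume "finite (range (\<lambda>x::real. (x, dd*x + c0)))"
    moreover have "inj (\<lambda>x::real. (x, dd*x + c0))" by (rule injI) simp
    ultimately have "finite (UNIV :: real set)" using finite_imageD by blast
    then show False using infinite_UNIV_char_0 by blast
  qed
  ultimately show False using finV finite_subset by blast
qed

lemma interp_one:
  assumes "card S \<le> 3" "k0 \<in> S" "inj_on X S"
  shows "\<exists>f. deg2 f \<and> (\<forall>k\<in>S. k \<noteq> k0 \<longrightarrow> E f $ k = 0) \<and> E f $ k0 \<noteq> 0"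
proof -
  define P where "P = (\<Prod>l\<in>S-{k0}. [:- X l, 1:])"
  have "degree P \<le> (\<Sum>l\<in>S-{k0}. degree [:- X l, 1::real:])"
    unfolding P_def using degree_prod_sum_le[of "S-{k0}" "\<lambda>l. [:- X l, 1:]"] by (simp add: comp_def)
  also have "\<dots> = card (S - {k0})" by simp
  also have "\<dots> \<le> 2" using assms(1,2) by (simp add: card_Diff_singleton)
  finally obtain f where f: "deg2 f" "\<forall>z. poly_eval f z = poly P (fst z)"
    using poly_to_vec by blast
  have Ef: "E f $ k = (\<Prod>l\<in>S-{k0}. X k - X l)" for k
    using f(2) by (simp add: E_nth P_def poly_prod pts_XY)
  have "\<forall>k\<in>S. k \<noteq> k0 \<longrightarrow> E f $ k = 0"
    unfolding Ef by (auto intro: prod_zero[of _ k for k])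
  moreover have "E f $ k0 \<noteq> 0"
    unfolding Ef using assms(2,3) by (auto simp: prod_zero_iff inj_on_def)
  ultimately show ?thesis using f(1) by blast
qed

end

context L begin

lemma case_eq1_W: assumes cd: "cc * dd = 1" and ij: "i \<noteq> j" shows "W i j = 0"
proof (rule ccontr)
  assume Wne: "W i j \<noteq> 0"
  define ell where "ell k = Y k - dd * X k" for k
  have sep: "W a b = 0" if "ell a \<noteq> ell b" for a b
  proof -
    have "(ell a - ell b) * W a b = 0" using case_eq1[OF cd, of a b] unfolding ell_def by (simp add: algebra_simps)
    then show ?thesis using that by simp
  qed
  have lij: "ell i = ell j" using sep Wne by blast
  define S where "S = {k. ell k = ell i}"
  have iS: "i \<in> S" and jS: "j \<in> S" using lij unfolding S_def by auto
  have injX: "inj_on X S"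
  proof (rule inj_onI)
    fix a b assume "a \<in> S" "b \<in> S" "X a = X b"
    then have "Y a = Y b" unfolding S_def ell_def by auto
    then have "pts a = pts b" using \<open>X a = X b\<close> pts_XY by metis
    then show "a = b" by (rule pts_inj)
  qed
  have cardS: "card S \<le> 3"
    by (rule line_bound[OF _ injX, of "ell i"]) (auto simp: S_def ell_def)
  have cross: "ZC$a$b = 0" if "a \<in> S" "b \<notin> S" for a b
    using sep[of a b] that unfolding S_def ZC_def by auto
  have cross': "ZC$a$b = 0" if "a \<notin> S" "b \<in> S" for a b
    using sep[of a b] that unfolding S_def ZC_def by auto
  define nv where "nv k = phi (axis k 1)" for k
  have phiv: "phi v = (\<Sum>k\<in>UNIV. v$k * nv k)" for v unfolding nv_def by (rule phi_expand)
  have "\<exists>l. l \<notin> S \<and> nv l \<noteq> 0"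
  proof (rule ccontr)
    assume nex: "\<not> (\<exists>l. l \<notin> S \<and> nv l \<noteq> 0)"
    have nvout: "nv l = 0" if "l \<notin> S" for l using nex that by blast
    have "\<exists>k0. nv k0 \<noteq> 0"
    proof (rule ccontr)
      assume "\<not> (\<exists>k0. nv k0 \<noteq> 0)"
      then have "nv k = 0" for k by blast
      then have "phi (E e) = 0" unfolding phiv by simp
      then show False using phi_Ee by simp
    qed
    then obtain k0 where k0: "nv k0 \<noteq> 0" by blast
    have k0S: "k0 \<in> S" using nvout k0 by blast
    obtain f where f: "deg2 f" "\<forall>k\<in>S. k \<noteq> k0 \<longrightarrow> E f $ k = 0" "E f $ k0 \<noteq> 0"
      using interp_one[OF cardS k0S injX] by blast
    have "phi (E f) = 0" using phi_zero_iff f(1) by blast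
    moreover have "phi (E f) = E f $ k0 * nv k0"
    proof -
      have "phi (E f) = E f $ k0 * nv k0 + (\<Sum>k\<in>UNIV-{k0}. E f $ k * nv k)"
        unfolding phiv by (subst sum.remove[of _ k0]) simp_all
      moreover have "(\<Sum>k\<in>UNIV-{k0}. E f $ k * nv k) = 0"
      proof (rule sum.neutral, rule ballI)
        fix k assume "k \<in> UNIV - {k0}"
        then show "E f $ k * nv k = 0" using f(2) nvout by (cases "k \<in> S") auto
      qed
      ultimately show ?thesis by simp
    qed
    ultimately show False using f(3) k0 by simp
  qed
  then obtain l where l: "l \<notin> S" "nv l \<noteq> 0" by blast
  have phi_diff: "phi (a - b) = phi a - phi b" for a b
  proof -
    have "a - b = a + (-1) *s b" by (simp add: vec_eq_iff)
    then have "phi (a - b) = phi (a + (-1) *s b)" by (rule arg_cong)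
    also have "\<dots> = phi a + (-1) * phi b" by (simp only: phi_add phi_scale)
    finally show ?thesis by simp
  qed
  define u where "u = axis i 1 + (- (nv i / nv l)) *s axis l 1"
  define w where "w = axis j 1 + (- (nv j / nv l)) *s axis l 1"
  have "phi u = 0" unfolding u_def nv_def[symmetric] using l(2) by (simp add: phi_add phi_diff phi_scale nv_def)
  then obtain f where f: "deg2 f" "E f = u" using phi_zero_iff by blast
  have "phi w = 0" unfolding w_def nv_def[symmetric] using l(2) by (simp add: phi_add phi_diff phi_scale nv_def)
  then obtain g where g: "deg2 g" "E g = w" using phi_zero_iff by blast
  have "zf ZC u w = 0" using ZC_c1[OF f(1) g(1)] f(2) g(2) by simp
  moreover have "ZC$l$l = 0" using ZC_anti[of l l] by simp
  moreover have "zf ZC u w = ZC$i$j + (- (nv j / nv l)) * ZC$i$l + (- (nv i / nv l)) * ZC$l$j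
      + (- (nv i / nv l)) * (- (nv j / nv l)) * ZC$l$l"
    unfolding u_def w_def zf_add1 zf_add2 zf_scale1 zf_scale2 zf_axis by (simp add: algebra_simps)
  ultimately have "ZC$i$j = 0" using cross[OF iS l(1)] cross'[OF l(1) jS] by simp
  then have "(X i - X j) * W i j = 0" unfolding ZC_def by simp
  moreover have "X i \<noteq> X j" using injX iS jS ij unfolding inj_on_def by blast
  ultimately show False using Wne by simp
qed

lemma W_diag: "i \<noteq> j \<Longrightarrow> W i j = 0"
  using case_ne1 case_eq1_W by blast

end

lemma split_exp: "i + j \<le> 6 \<Longrightarrow> \<exists>r c. fst(expo r)+fst(expo c) = i \<and> snd(expo r)+snd(expo c) = j"
proof -
  assume h: "i + j \<le> 6"
  have ex: "\<exists>r. expo r = (a, b)" if "a + b \<le> 3" for a b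
  proof -
    have "a \<le> 3" "b \<le> 3" using that by auto
    then show ?thesis using that
      by (auto simp: le_Suc_eq numeral_3_eq_3 numeral_2_eq_2
          intro: exI[of _ M1] exI[of _ MX] exI[of _ MY] exI[of _ MXX] exI[of _ MXY] exI[of _ MYY]
          exI[of _ MXXX] exI[of _ MXXY] exI[of _ MXYY] exI[of _ MYYY])
  qed
  define i1 where "i1 = min i 3"
  define j1 where "j1 = min j (3 - i1)"
  obtain r where r: "expo r = (i1, j1)" using ex[of i1 j1] unfolding i1_def j1_def by fastforce
  obtain c where c: "expo c = (i - i1, j - j1)" using ex[of "i - i1" "j - j1"] h unfolding i1_def j1_def by fastforce
  have "i1 \<le> i" "j1 \<le> j" unfolding i1_def j1_def by auto
  then show ?thesis using r c by (intro exI[of _ r] exI[of _ c]) simp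
qed

lemma ip_axis_axis: "ip \<beta> (axis r 1) (axis c 1) = \<beta> (fst(expo r)+fst(expo c)) (snd(expo r)+snd(expo c))"
proof -
  have "ip \<beta> (axis r 1) (axis c 1) = (\<Sum>r'\<in>UNIV. axis r 1 $ r' * \<beta> (fst(expo r')+fst(expo c)) (snd(expo r')+snd(expo c)))"
    by (rule ip_axis2)
  also have "\<dots> = \<beta> (fst(expo r)+fst(expo c)) (snd(expo r)+snd(expo c))"
    by (subst sum.remove[of _ r]) auto
  finally show ?thesis .
qed

context L begin

definition rho where "rho i = W i i"

lemma rho_nonneg: "0 \<le> rho i"
  using psdM unfolding psd_def rho_def W_def ip_def by blast

lemma ip_diag: "ip \<beta> f g = (\<Sum>i\<in>UNIV. rho i * E f $ i * E g $ i)"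
proof -
  have "ip \<beta> f g = (\<Sum>i\<in>UNIV. \<Sum>j\<in>UNIV. E f $ i * E g $ j * W i j)" unfolding KI Bf_def ..
  also have "\<dots> = (\<Sum>i\<in>UNIV. rho i * E f $ i * E g $ i)"
  proof (rule sum.cong[OF refl])
    fix i
    show "(\<Sum>j\<in>UNIV. E f $ i * E g $ j * W i j) = rho i * E f $ i * E g $ i"
      by (subst sum.remove[of _ i]) (auto simp: W_diag rho_def)
  qed
  finally show ?thesis .
qed

lemma moments: "\<beta> (fst(expo r)+fst(expo c)) (snd(expo r)+snd(expo c)) =
   (\<Sum>k\<in>UNIV. rho k * (fst (pts k) ^ (fst(expo r)+fst(expo c)) * snd (pts k) ^ (snd(expo r)+snd(expo c))))"
  unfolding ip_axis_axis[symmetric] ip_diag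
  by (simp add: E_nth poly_eval_axis power_add algebra_simps)

definition mu :: "(real \<times> real) measure" where
  "mu = distr (density (count_space UNIV) (\<lambda>k. ennreal (rho k))) borel pts"

lemma mu_repr: "representing_measure \<beta> mu"
  unfolding representing_measure_def
proof (intro conjI allI impI)
  show "sets mu = sets borel" unfolding mu_def by simp
  fix i j :: nat assume ij: "i + j \<le> 6"
  let ?h = "\<lambda>z::real\<times>real. fst z ^ i * snd z ^ j"
  have hm: "?h \<in> borel_measurable borel" by (intro borel_measurable_continuous_onI continuous_intros)
  have pm: "pts \<in> density (count_space UNIV) (\<lambda>k. ennreal (rho k)) \<rightarrow>\<^sub>M borel"
    by (simp add: measurable_count_space_eq1)
  have dm: "(\<lambda>k. ?h (pts k)) \<in> borel_measurable (count_space (UNIV::bm set))" by simp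
  have rm: "rho \<in> borel_measurable (count_space (UNIV::bm set))" by simp
  have ae: "AE k in count_space UNIV. 0 \<le> rho k" using rho_nonneg by simp
  show "integrable mu ?h"
    unfolding mu_def
    by (simp add: integrable_distr_eq[OF pm hm] integrable_density[OF dm rm ae] integrable_count_space)
  have "(\<integral>z. ?h z \<partial>mu) = (\<Sum>k\<in>UNIV. rho k * ?h (pts k))"
    unfolding mu_def
    by (simp add: integral_distr[OF pm hm] integral_density[OF dm rm ae] lebesgue_integral_count_space_finite)
  moreover obtain r c where rc: "fst(expo r)+fst(expo c) = i" "snd(expo r)+snd(expo c) = j"
    using split_exp[OF ij] by blast
  ultimately show "\<beta> i j = (\<integral>z. ?h z \<partial>mu)" using moments[of r c] by simp
qed

end

lemma dir2:
  assumes "psd (moment_matrix3 \<beta>)" "card (variety (moment_matrix3 \<beta>)) = 7"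
    "cols_basis (moment_matrix3 \<beta>) Bset" "weakly_consistent (moment_matrix3 \<beta>)"
  shows "\<exists>\<mu>. representing_measure \<beta> \<mu>"
proof -
  interpret L \<beta> using assms by unfold_locales
  show ?thesis using mu_repr by blast
qed

theorem theorem4p4:
  fixes \<beta> :: "nat \<Rightarrow> nat \<Rightarrow> real"
  assumes "psd (moment_matrix3 \<beta>)"
    and "pd (moment_matrix2 \<beta>)"
    and "rank (moment_matrix3 \<beta>) = 7"
    and "card (variety (moment_matrix3 \<beta>)) = 7"
    and "cols_basis (moment_matrix3 \<beta>) {M1, MX, MY, MXX, MXY, MYY, MXYY}"
  shows "(\<exists>\<mu>. representing_measure \<beta> \<mu>) \<longleftrightarrow> weakly_consistent (moment_matrix3 \<beta>)"
  using dir1 dir2[OF assms(1,4,5)] by blast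

end
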